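(* Let $k\geqslant0$ and $m\geqslant1$ be integers, let $U\subset\{k+1,\dots,k+m\}$, let $q$ be a positive integer and $a$ a residue class modulo $q$. If $|U|\geqslant\frac m2+\frac q2$, then the number of elements of $U+U$ that are congruent to $a$ modulo $q$ is at least $\frac2q|U|-1$.
   Context: $U+U=\{u+u':u,u'\in U\}$. *)

theory Defs
  imports Complex_Main "HOL-Number_Theory.Cong"
begin

definition sumset :: "int set \<Rightarrow> int set \<Rightarrow> int set" where
  "sumset A B = {u + v | u v. u \<in> A \<and> v \<in> B}"

end

theory Submission
  imports Defs
begin

lemma refl_inv:
  fixes q a r :: int
  assumes "r \<in> {0..<q}"
  shows "(a - (a - r) mod q) mod q = r"
proof -
  have "(a - (a - r) mod q) mod q = (a - (a - r)) mod q" by (rule mod_diff_right_eq)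
  also have "\<dots> = r" using assms by simp
  finally show ?thesis .
qed

lemma refl_range:
  fixes q a r :: int
  assumes "q > 0"
  shows "(a - r) mod q \<in> {0..<q}"
  using assms by simp

lemma sumset_img: "sumset A B = (\<lambda>(u,v). u+v) ` (A \<times> B)"
  unfolding sumset_def by auto

lemma cd_int:
  fixes A B :: "int set"
  assumes "finite A" "finite B" "A \<noteq> {}" "B \<noteq> {}"
  shows "card (sumset A B) + 1 \<ge> card A + card B"
proof -
  define a0 where "a0 = Min A"
  define b1 where "b1 = Max B"
  have a0: "a0 \<in> A" "\<And>x. x \<in> A \<Longrightarrow> a0 \<le> x" using assms a0_def by auto
  have b1: "b1 \<in> B" "\<And>x. x \<in> B \<Longrightarrow> x \<le> b1" using assms b1_def by auto
  define X where "X = (\<lambda>b. a0+b) ` B"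
  define Y where "Y = (\<lambda>a. a+b1) ` A"
  have cX: "card X = card B" unfolding X_def by (rule card_image) (simp add: inj_on_def)
  have cY: "card Y = card A" unfolding Y_def by (rule card_image) (simp add: inj_on_def)
  have XY: "X \<inter> Y \<subseteq> {a0+b1}"
  proof
    fix z assume "z \<in> X \<inter> Y"
    then obtain a b where "a \<in> A" "b \<in> B" "z = a0 + b" "z = a + b1" unfolding X_def Y_def by auto
    with a0 b1 show "z \<in> {a0+b1}" by force
  qed
  have fX: "finite X" "finite Y" using assms X_def Y_def by auto
  have "card (X \<inter> Y) \<le> 1" using card_mono[OF _ XY] by simp
  moreover have "X \<union> Y \<subseteq> sumset A B" unfolding X_def Y_def sumset_def using a0 b1 by blast
  moreover have "finite (sumset A B)" using assms by (simp add: sumset_img)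
  ultimately have "card (X \<union> Y) \<le> card (sumset A B)" "card (X \<inter> Y) \<le> 1"
    by (auto intro: card_mono)
  with card_Un_Int[OF fX] cX cY show ?thesis by linarith
qed

lemma class_bound:
  fixes S :: "int set" and k m q r :: int
  assumes "S \<subseteq> {k+1..k+m}" "q > 0" "\<And>x. x \<in> S \<Longrightarrow> x mod q = r" "m \<ge> 1"
  shows "q * int (card S) \<le> m + q - 1"
proof -
  define f where "f x = (x - (k+1)) div q" for x
  have inj: "inj_on f S"
  proof (rule inj_onI)
    fix x y assume "x \<in> S" "y \<in> S" "f x = f y"
    then have "x mod q = y mod q" "(x-(k+1)) div q = (y-(k+1)) div q" using assms(3) f_def by auto
    then show "x = y" by (smt (verit) div_mod_decomp_int mod_diff_left_eq)
  qed
  have "f ` S \<subseteq> {0..(m-1) div q}"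
  proof
    fix z assume "z \<in> f ` S"
    then obtain x where x: "x \<in> S" "z = f x" by auto
    then have "0 \<le> x - (k+1)" "x - (k+1) \<le> m - 1" using assms(1) by auto
    then show "z \<in> {0..(m-1) div q}" using x assms(2) f_def
      by (auto intro: div_pos_pos_trivial zdiv_mono1 pos_imp_zdiv_nonneg_iff[THEN iffD2])
  qed
  then have "card (f ` S) \<le> card {0..(m-1) div q}" by (intro card_mono) auto
  moreover have "(m-1) div q \<ge> 0" using assms by (simp add: pos_imp_zdiv_nonneg_iff)
  ultimately have "int (card S) \<le> (m-1) div q + 1" using card_image[OF inj]
    by (simp add: le_nat_iff)
  then have "q * int (card S) \<le> q * ((m-1) div q) + q" using assms(2)
    using mult_left_mono[of "int (card S)" "(m-1) div q + 1" q] by (simp add: distrib_left)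
  moreover have "q * ((m-1) div q) \<le> m - 1"
  proof -
    have "q * ((m-1) div q) + (m-1) mod q = m-1" by (rule mult_div_mod_eq)
    moreover have "(m-1) mod q \<ge> 0" using assms(2) by simp
    ultimately show ?thesis by linarith
  qed
  ultimately show ?thesis by linarith
qed

theorem mainTheorem7:
  fixes k m q a :: int and U :: "int set"
  assumes "k \<ge> 0" and "m \<ge> 1"
    and "U \<subseteq> {k+1..k+m}"
    and "q > 0"
    and "real (card U) \<ge> real_of_int m / 2 + real_of_int q / 2"
  shows "real (card {x \<in> sumset U U. [x = a] (mod q)}) \<ge> 2 / real_of_int q * real (card U) - 1"
proof -
  define n where "n = card U"
  define C where "C r = {u \<in> U. u mod q = r}" for r
  define c where "c r = real (card (C r))" for r
  have finU: "finite U" using assms(3) finite_subset by blast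
  have finC: "finite (C r)" for r using finU C_def by auto
  have bnd: "real_of_int q * c r < 2 * real n" for r
  proof -
    have "q * int (card (C r)) \<le> m + q - 1"
      by (rule class_bound[OF _ assms(4) _ assms(2), of _ k r]) (use assms(3) C_def in auto)
    then have "real_of_int (q * int (card (C r))) \<le> real_of_int (m + q - 1)" by linarith
    then have "real_of_int q * c r \<le> real_of_int m + real_of_int q - 1" unfolding c_def by simp
    then show ?thesis using assms(5) n_def by linarith
  qed
  have part: "(\<Sum>r\<in>{0..<q}. c r) = real n"
  proof -
    have U: "U = (\<Union>r\<in>{0..<q}. C r)" using assms(4) C_def by auto
    have "card U = (\<Sum>r\<in>{0..<q}. card (C r))"
      by (subst U, rule card_UN_disjoint) (auto simp: finU C_def)
    then show ?thesis unfolding c_def n_def by simp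
  qed
  have part2: "(\<Sum>r\<in>{0..<q}. c ((a - r) mod q)) = real n"
  proof -
    have "(\<Sum>r\<in>{0..<q}. c ((a - r) mod q)) = (\<Sum>r\<in>{0..<q}. c r)"
      by (rule sum.reindex_bij_witness[of _ "\<lambda>r. (a - r) mod q" "\<lambda>r. (a - r) mod q"])
        (auto simp: refl_inv refl_range assms(4))
    then show ?thesis using part by simp
  qed
  have "\<exists>r\<in>{0..<q}. c r + c ((a - r) mod q) \<ge> 2 * real n / real_of_int q"
  proof (rule ccontr)
    assume "\<not> ?thesis"
    then have "(\<Sum>r\<in>{0..<q}. c r + c ((a - r) mod q)) < (\<Sum>r\<in>{0..<q}. 2 * real n / real_of_int q)"
      using assms(4) by (intro sum_strict_mono) (auto simp: not_le)
    also have "\<dots> = 2 * real n" using assms(4) by simp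
    finally show False using part part2 by (simp add: sum.distrib)
  qed
  then obtain r where r: "r \<in> {0..<q}" "c r + c ((a - r) mod q) \<ge> 2 * real n / real_of_int q" by blast
  define A where "A = C r"
  define B where "B = C ((a - r) mod q)"
  have qpos: "real_of_int q > 0" using assms(4) by simp
  have cA: "real (card A) * real_of_int q < 2 * real n" using bnd[of r] A_def c_def by (simp add: mult.commute)
  have cB: "real (card B) * real_of_int q < 2 * real n" using bnd[of "(a-r) mod q"] B_def c_def by (simp add: mult.commute)
  have rr: "(real (card A) + real (card B)) * real_of_int q \<ge> 2 * real n"
    using r(2) qpos A_def B_def c_def by (simp add: pos_divide_le_eq)
  have Ane: "A \<noteq> {}"
  proof
    assume "A = {}" then show False using rr cB by simp
  qed
  have Bne: "B \<noteq> {}"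
  proof
    assume "B = {}" then show False using rr cA by simp
  qed
  have sub: "sumset A B \<subseteq> {x \<in> sumset U U. [x = a] (mod q)}"
  proof
    fix x assume "x \<in> sumset A B"
    then obtain u v where uv: "u \<in> A" "v \<in> B" "x = u + v" unfolding sumset_def by auto
    then have "u \<in> U" "v \<in> U" "u mod q = r" "v mod q = (a - r) mod q" using A_def B_def C_def by auto
    moreover have "(u + v) mod q = a mod q"
    proof -
      have "(u + v) mod q = (u mod q + v mod q) mod q" by (simp add: mod_add_eq)
      also have "\<dots> = (r + (a - r) mod q) mod q" using calculation \<open>u mod q = r\<close> \<open>v mod q = (a - r) mod q\<close> by simp
      also have "\<dots> = a mod q" by (simp add: mod_add_right_eq)
      finally show ?thesis .
    qed
    ultimately show "x \<in> {x \<in> sumset U U. [x = a] (mod q)}" using uv unfolding sumset_def cong_def by auto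
  qed
  have "finite {x \<in> sumset U U. [x = a] (mod q)}" using finU by (simp add: sumset_img)
  then have "card (sumset A B) \<le> card {x \<in> sumset U U. [x = a] (mod q)}" using sub card_mono by blast
  moreover have "card (sumset A B) + 1 \<ge> card A + card B"
    using cd_int finC Ane Bne A_def B_def by blast
  ultimately have "real (card {x \<in> sumset U U. [x = a] (mod q)}) + 1 \<ge> real (card A) + real (card B)"
    by linarith
  moreover have "real (card A) + real (card B) \<ge> 2 / real_of_int q * real n"
    using rr qpos by (simp add: pos_divide_le_eq mult.commute)
  ultimately show ?thesis unfolding n_def by linarith
qed

end
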